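(* Let $X$ be a special (abstract) rank one group with abelian unipotent subgroups $A$ and $B$, and set $H = N_X(A) \cap N_X(B)$. Then for all $1 \neq a_1, a_2 \in A$ with $a_1 a_2 \neq 1$ we have $a_1 \in a_2 [A,H]$.
   Context: For a group $X$ and $g,x \in X$, write $x^g = g^{-1}xg$, $A^g = g^{-1}Ag$, and $[x,g] = x^{-1}g^{-1}xg$; $[A,H]$ denotes the subgroup generated by all $[a,h]$ with $a \in A$, $h \in H$. A group $X$ is an (abstract) rank one group with abelian unipotent subgroups $A$ and $B$ if $X = \langle A, B\rangle$ where $A$ and $B$ are different abelian subgroups of $X$ such that for each $1 \neq a \in A$ there is an element $1 \neq b \in B$ with $A^b = B^a$, and for each $1 \neq b \in B$ there is an element $1 \neq a \in A$ with $B^a = A^b$. In such a group, for each $1 \neq a \in A$ the element $1 \neq b \in B$ with $A^b = B^a$ is uniquely determined and is denoted $b(a)$. The group $X$ is called special if $b(a^{-1}) = b(a)^{-1}$ for all $1 \neq a \in A$. *)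

theory Defs
  imports "HOL-Algebra.Group_Action" "HOL-Algebra.Generated_Groups"
begin

definition conjg :: "('a, 'b) monoid_scheme \<Rightarrow> 'a \<Rightarrow> 'a \<Rightarrow> 'a" where
  "conjg G x g = inv\<^bsub>G\<^esub> g \<otimes>\<^bsub>G\<^esub> x \<otimes>\<^bsub>G\<^esub> g"

definition conjset :: "('a, 'b) monoid_scheme \<Rightarrow> 'a set \<Rightarrow> 'a \<Rightarrow> 'a set" where
  "conjset G A g = (\<lambda>x. conjg G x g) ` A"

definition commg :: "('a, 'b) monoid_scheme \<Rightarrow> 'a \<Rightarrow> 'a \<Rightarrow> 'a" where
  "commg G x g = inv\<^bsub>G\<^esub> x \<otimes>\<^bsub>G\<^esub> inv\<^bsub>G\<^esub> g \<otimes>\<^bsub>G\<^esub> x \<otimes>\<^bsub>G\<^esub> g"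

definition comm_subgroup :: "('a, 'b) monoid_scheme \<Rightarrow> 'a set \<Rightarrow> 'a set \<Rightarrow> 'a set" where
  "comm_subgroup G A H = generate G {commg G a h | a h. a \<in> A \<and> h \<in> H}"

definition rank_one_group :: "('a, 'b) monoid_scheme \<Rightarrow> 'a set \<Rightarrow> 'a set \<Rightarrow> bool" where
  "rank_one_group G A B \<longleftrightarrow>
     group G \<and> subgroup A G \<and> subgroup B G \<and>
     (\<forall>x\<in>A. \<forall>y\<in>A. x \<otimes>\<^bsub>G\<^esub> y = y \<otimes>\<^bsub>G\<^esub> x) \<and>
     (\<forall>x\<in>B. \<forall>y\<in>B. x \<otimes>\<^bsub>G\<^esub> y = y \<otimes>\<^bsub>G\<^esub> x) \<and>
     A \<noteq> B \<and>
     generate G (A \<union> B) = carrier G \<and>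
     (\<forall>a\<in>A - {\<one>\<^bsub>G\<^esub>}. \<exists>b\<in>B - {\<one>\<^bsub>G\<^esub>}. conjset G A b = conjset G B a) \<and>
     (\<forall>b\<in>B - {\<one>\<^bsub>G\<^esub>}. \<exists>a\<in>A - {\<one>\<^bsub>G\<^esub>}. conjset G B a = conjset G A b)"

definition b_of :: "('a, 'b) monoid_scheme \<Rightarrow> 'a set \<Rightarrow> 'a set \<Rightarrow> 'a \<Rightarrow> 'a" where
  "b_of G A B a = (THE b. b \<in> B - {\<one>\<^bsub>G\<^esub>} \<and> conjset G A b = conjset G B a)"

definition special_rank_one_group :: "('a, 'b) monoid_scheme \<Rightarrow> 'a set \<Rightarrow> 'a set \<Rightarrow> bool" where
  "special_rank_one_group G A B \<longleftrightarrow> rank_one_group G A B \<and>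
     (\<forall>a\<in>A - {\<one>\<^bsub>G\<^esub>}. b_of G A B (inv\<^bsub>G\<^esub> a) = inv\<^bsub>G\<^esub> (b_of G A B a))"

end

theory Submission
  imports Defs
begin

context group
begin

lemma cs_sub_carrier: "X \<subseteq> carrier G \<Longrightarrow> g \<in> carrier G \<Longrightarrow> conjset G X g \<subseteq> carrier G"
  unfolding conjset_def conjg_def by auto

lemma lcan1 [simp]: "x \<in> carrier G \<Longrightarrow> y \<in> carrier G \<Longrightarrow> inv x \<otimes> (x \<otimes> y) = y"
  by (simp add: m_assoc[symmetric])
lemma lcan2 [simp]: "x \<in> carrier G \<Longrightarrow> y \<in> carrier G \<Longrightarrow> x \<otimes> (inv x \<otimes> y) = y"
  by (simp add: m_assoc[symmetric])

lemma div_one_eq: "x \<otimes> inv y = \<one> \<Longrightarrow> x \<in> carrier G \<Longrightarrow> y \<in> carrier G \<Longrightarrow> x = y"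
proof -
  assume h: "x \<otimes> inv y = \<one>" "x \<in> carrier G" "y \<in> carrier G"
  have "x = x \<otimes> inv y \<otimes> y" using h(2,3) by (simp add: m_assoc)
  also have "\<dots> = y" using h by simp
  finally show "x = y" .
qed

lemma cs_mult:
  assumes "X \<subseteq> carrier G" "g \<in> carrier G" "h \<in> carrier G"
  shows "conjset G (conjset G X g) h = conjset G X (g \<otimes> h)"
  unfolding conjset_def conjg_def image_image
proof (rule image_cong[OF refl])
  fix x assume "x \<in> X"
  then have x: "x \<in> carrier G" using assms by auto
  show "inv h \<otimes> (inv g \<otimes> x \<otimes> g) \<otimes> h = inv (g \<otimes> h) \<otimes> x \<otimes> (g \<otimes> h)"
    using x assms by (simp add: m_assoc inv_mult_group)
qed

lemma cs_one: "X \<subseteq> carrier G \<Longrightarrow> conjset G X \<one> = X"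
  unfolding conjset_def conjg_def by (auto simp: subsetD)

lemma cs_inv:
  assumes "X \<subseteq> carrier G" "g \<in> carrier G" "conjset G X g = Y"
  shows "conjset G Y (inv g) = X"
  using assms cs_mult[of X g "inv g"] cs_one[of X] by simp

lemma cs_sub_le:
  assumes "subgroup X G" "g \<in> X"
  shows "conjset G X g \<subseteq> X"
  unfolding conjset_def conjg_def
  using assms by (auto intro!: subgroup.m_closed subgroup.m_inv_closed)

lemma cs_sub:
  assumes "subgroup X G" "g \<in> X"
  shows "conjset G X g = X"
proof -
  have sX: "X \<subseteq> carrier G" using assms(1) subgroup.subset by blast
  have g: "g \<in> carrier G" using assms(2) sX by (rule subsetD[rotated])
  have ig: "inv g \<in> X" using subgroup.m_inv_closed[OF assms(1,2)] .
  have le: "conjset G X (inv g) \<subseteq> X" using cs_sub_le[OF assms(1) ig] .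
  have eq: "conjset G (conjset G X (inv g)) g = X"
    using cs_mult[OF sX inv_closed[OF g] g] cs_one[OF sX] l_inv[OF g] by simp
  have "conjset G (conjset G X (inv g)) g \<subseteq> conjset G X g"
    unfolding conjset_def[of G _ g] by (rule image_mono[OF le])
  then have "X \<subseteq> conjset G X g" using eq by simp
  then show ?thesis using cs_sub_le[OF assms] by (rule equalityI[rotated])
qed

end

lemma (in group) main_lemma:
  assumes "special_rank_one_group G A B"
    and "a1 \<in> A" and "a2 \<in> A"
    and "a1 \<noteq> \<one>" and "a2 \<noteq> \<one>"
    and "a1 \<otimes> a2 \<noteq> \<one>"
  shows "a1 \<in> a2 <# comm_subgroup G A (normalizer G A \<inter> normalizer G B)"
proof -
  note S = assms(1)[unfolded special_rank_one_group_def rank_one_group_def]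
  have sA: "subgroup A G" and sB: "subgroup B G" using S by auto
  have AC: "A \<subseteq> carrier G" and BC: "B \<subseteq> carrier G" using sA sB subgroup.subset by blast+
  have commA: "\<And>x y. x \<in> A \<Longrightarrow> y \<in> A \<Longrightarrow> x \<otimes> y = y \<otimes> x" using S by blast
  have commB: "\<And>x y. x \<in> B \<Longrightarrow> y \<in> B \<Longrightarrow> x \<otimes> y = y \<otimes> x" using S by blast
  have AB: "A \<noteq> B" using S by blast
  have exA: "\<And>a. a \<in> A \<Longrightarrow> a \<noteq> \<one> \<Longrightarrow> \<exists>b\<in>B - {\<one>}. conjset G A b = conjset G B a" using S by blast
  have exB: "\<And>b. b \<in> B \<Longrightarrow> b \<noteq> \<one> \<Longrightarrow> \<exists>a\<in>A - {\<one>}. conjset G B a = conjset G A b" using S by blast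
  have spec: "\<And>a. a \<in> A \<Longrightarrow> a \<noteq> \<one> \<Longrightarrow> b_of G A B (inv a) = inv (b_of G A B a)" using S by blast
  have NB: "\<And>c. c \<in> A \<Longrightarrow> conjset G B c = B \<Longrightarrow> c = \<one>"
  proof (rule ccontr)
    fix c assume c: "c \<in> A" "conjset G B c = B" "c \<noteq> \<one>"
    then obtain b where b: "b \<in> B" "conjset G A b = B" using exA by fastforce
    have "conjset G B (inv b) = A" using cs_inv[OF AC subsetD[OF BC b(1)] b(2)] .
    moreover have "conjset G B (inv b) = B" using cs_sub[OF sB subgroup.m_inv_closed[OF sB b(1)]] .
    ultimately show False using AB by simp
  qed
  have NA: "\<And>d. d \<in> B \<Longrightarrow> conjset G A d = A \<Longrightarrow> d = \<one>"
  proof (rule ccontr)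
    fix d assume d: "d \<in> B" "conjset G A d = A" "d \<noteq> \<one>"
    then obtain a where a: "a \<in> A" "conjset G B a = A" using exB by fastforce
    have "conjset G A (inv a) = B" using cs_inv[OF BC subsetD[OF AC a(1)] a(2)] .
    moreover have "conjset G A (inv a) = A" using cs_sub[OF sA subgroup.m_inv_closed[OF sA a(1)]] .
    ultimately show False using AB by simp
  qed
  have beta: "b_of G A B a \<in> B \<and> conjset G A (b_of G A B a) = conjset G B a" if a: "a \<in> A" "a \<noteq> \<one>" for a
  proof -
    have "\<exists>!b. b \<in> B - {\<one>} \<and> conjset G A b = conjset G B a"
    proof -
      obtain b where b: "b \<in> B - {\<one>}" "conjset G A b = conjset G B a" using exA a by blast
      have U: "b' = b" if b': "b' \<in> B - {\<one>}" "conjset G A b' = conjset G B a" for b'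
      proof -
        have bc: "b \<in> carrier G" "b' \<in> carrier G" using b b' BC by auto
        have "conjset G A (b' \<otimes> inv b) = conjset G (conjset G A b') (inv b)"
          using cs_mult[OF AC] bc by simp
        also have "\<dots> = A" using cs_inv[OF AC bc(1) b(2)] b'(2) b(2) by simp
        finally have "b' \<otimes> inv b = \<one>"
          using NA b b' sB subgroup.m_closed subgroup.m_inv_closed by (metis DiffD1)
        then show ?thesis using bc by (metis inv_equality inv_inv inv_closed)
      qed
      show ?thesis
      proof (rule ex1I[of _ b])
        show "b \<in> B - {\<one>} \<and> conjset G A b = conjset G B a" using b by (rule conjI)
      next
        fix b' assume "b' \<in> B - {\<one>} \<and> conjset G A b' = conjset G B a"
        then show "b' = b" using U by blast
      qed
    qed
    then have "(THE b. b \<in> B - {\<one>} \<and> conjset G A b = conjset G B a) \<in> B - {\<one>} \<and>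
      conjset G A (THE b. b \<in> B - {\<one>} \<and> conjset G A b = conjset G B a) = conjset G B a"
      by (rule theI')
    then show ?thesis unfolding b_of_def by blast
  qed
  define \<beta> where "\<beta> = b_of G A B"
  define m where "m = (\<lambda>a. a \<otimes> inv (\<beta> a) \<otimes> a)"
  have binv: "conjset G A (inv (\<beta> a)) = conjset G B (inv a)" if a: "a \<in> A" "a \<noteq> \<one>" for a
  proof -
    have ia: "inv a \<in> A" using subgroup.m_inv_closed[OF sA a(1)] .
    have nia: "inv a \<noteq> \<one>" using a(2) subsetD[OF AC a(1)] by simp
    have "b_of G A B (inv a) = inv (\<beta> a)" using spec[OF a] unfolding \<beta>_def .
    then show ?thesis using beta[OF ia nia] by simp
  qed
  have bB: "\<beta> a \<in> B" "\<beta> a \<in> carrier G" "conjset G A (\<beta> a) = conjset G B a" if "a \<in> A" "a \<noteq> \<one>" for a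
    using beta[OF that] BC unfolding \<beta>_def by auto
  have mC: "m a \<in> carrier G" if "a \<in> A" "a \<noteq> \<one>" for a
    using bB[OF that] that AC unfolding m_def by auto
  have mA: "conjset G A (m a) = B" if a: "a \<in> A" "a \<noteq> \<one>" for a
  proof -
    have ac: "a \<in> carrier G" using a AC by auto
    have "conjset G A (m a) = conjset G (conjset G (conjset G A a) (inv (\<beta> a))) a"
      using cs_mult AC ac bB[OF a] cs_sub_carrier unfolding m_def by simp
    also have "\<dots> = conjset G (conjset G B (inv a)) a" using cs_sub[OF sA a(1)] binv[OF a] by simp
    also have "\<dots> = B" using cs_mult[OF BC] cs_one[OF BC] ac by simp
    finally show ?thesis .
  qed
  have mB: "conjset G B (m a) = A" if a: "a \<in> A" "a \<noteq> \<one>" for a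
  proof -
    have ac: "a \<in> carrier G" using a AC by auto
    have "conjset G B (m a) = conjset G (conjset G (conjset G B a) (inv (\<beta> a))) a"
      using cs_mult BC ac bB[OF a] cs_sub_carrier unfolding m_def by simp
    also have "\<dots> = conjset G (conjset G (conjset G A (\<beta> a)) (inv (\<beta> a))) a" using bB[OF a] by simp
    also have "\<dots> = A" using cs_inv[OF AC bB(2)[OF a] refl] cs_sub[OF sA a(1)] by simp
    finally show ?thesis .
  qed
  define a3 where "a3 = a1 \<otimes> a2"
  have a1c: "a1 \<in> carrier G" and a2c: "a2 \<in> carrier G" using assms AC by auto
  have a3: "a3 \<in> A" "a3 \<noteq> \<one>" using assms sA subgroup.m_closed unfolding a3_def by auto
  define z where "z = (\<lambda>a. m a \<otimes> \<beta> a3 \<otimes> inv (m a))"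
  have zA: "z a \<in> A" if a: "a \<in> A" "a \<noteq> \<one>" for a
  proof -
    have "conjset G B (inv (m a)) = A" using cs_inv[OF AC mC[OF a] mA[OF a]] .
    moreover have "z a \<in> conjset G B (inv (m a))"
      unfolding conjset_def conjg_def z_def using bB[OF a3] mC[OF a] by auto
    ultimately show ?thesis by simp
  qed
  define h where "h = m a1 \<otimes> inv (m a2)"
  have m1: "m a1 \<in> carrier G" and m2: "m a2 \<in> carrier G" using mC assms by auto
  have hc: "h \<in> carrier G" unfolding h_def using m1 m2 by simp
  have hA: "conjset G A h = A"
    unfolding h_def using cs_mult[OF AC m1 inv_closed[OF m2]] mA[OF assms(2,4)]
      cs_inv[OF AC m2 mA[OF assms(3,5)]] by simp
  have hB: "conjset G B h = B"
    unfolding h_def using cs_mult[OF BC m1 inv_closed[OF m2]] mB[OF assms(2,4)]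
      cs_inv[OF BC m2 mB[OF assms(3,5)]] by simp
  have b3c: "\<beta> a3 \<in> carrier G" using bB[OF a3] by simp
  have zh: "inv h \<otimes> z a1 \<otimes> h = z a2"
    unfolding h_def z_def using m1 m2 b3c by (simp add: m_assoc inv_mult_group)
  have key: "conjset G B (z a \<otimes> a) = conjset G A (\<beta> a' \<otimes> \<beta> a)"
    if a: "a \<in> A" "a \<noteq> \<one>" and a': "a' \<in> A" "a' \<noteq> \<one>" and e: "a3 = a' \<otimes> a" for a a'
  proof -
    have ac: "a \<in> carrier G" and a'c: "a' \<in> carrier G" using a a' AC by auto
    have mdef: "m a = a \<otimes> inv (\<beta> a) \<otimes> a" unfolding m_def by simp
    have eq: "z a \<otimes> a = m a \<otimes> \<beta> a3 \<otimes> inv a \<otimes> \<beta> a"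
      unfolding z_def mdef using ac bB[OF a] b3c by (simp add: m_assoc inv_mult_group)
    have "conjset G B (z a \<otimes> a) = conjset G (conjset G (conjset G (conjset G B (m a)) (\<beta> a3)) (inv a)) (\<beta> a)"
      unfolding eq using cs_mult BC mC[OF a] b3c ac bB[OF a] cs_sub_carrier by simp
    also have "\<dots> = conjset G (conjset G (conjset G B a3) (inv a)) (\<beta> a)"
      using mB[OF a] bB[OF a3] by simp
    also have "conjset G (conjset G B a3) (inv a) = conjset G B a'"
      using cs_mult[OF BC] ac a'c e by (simp add: m_assoc)
    also have "conjset G B a' = conjset G A (\<beta> a')" using bB[OF a'] by simp
    also have "conjset G (conjset G A (\<beta> a')) (\<beta> a) = conjset G A (\<beta> a' \<otimes> \<beta> a)"
      by (rule cs_mult[OF AC bB(2)[OF a'] bB(2)[OF a]])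
    finally show ?thesis .
  qed
  have k1: "conjset G B (z a1 \<otimes> a1) = conjset G A (\<beta> a2 \<otimes> \<beta> a1)"
    using key[OF assms(2,4) assms(3,5)] commA assms unfolding a3_def by simp
  have k2: "conjset G B (z a2 \<otimes> a2) = conjset G A (\<beta> a1 \<otimes> \<beta> a2)"
    using key[OF assms(3,5) assms(2,4)] unfolding a3_def by simp
  have kk: "conjset G B (z a1 \<otimes> a1) = conjset G B (z a2 \<otimes> a2)"
    using k1 k2 commB bB assms by simp
  have z1: "z a1 \<in> A" and z2: "z a2 \<in> A" using zA assms by auto
  have z1c: "z a1 \<in> carrier G" and z2c: "z a2 \<in> carrier G" using z1 z2 AC by auto
  define c where "c = (z a1 \<otimes> a1) \<otimes> inv (z a2 \<otimes> a2)"
  have cA: "c \<in> A" unfolding c_def using z1 z2 assms sA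
    by (meson subgroup.m_closed subgroup.m_inv_closed)
  have "conjset G B c = conjset G (conjset G B (z a1 \<otimes> a1)) (inv (z a2 \<otimes> a2))"
    unfolding c_def using cs_mult[OF BC] z1c z2c a1c a2c by simp
  also have "\<dots> = B" using cs_inv[OF BC _ kk[symmetric]] z2c a2c by simp
  finally have "c = \<one>" by (rule NB[OF cA])
  then have zz: "z a1 \<otimes> a1 = z a2 \<otimes> a2" unfolding c_def
    by (rule div_one_eq) (use z1c z2c a1c a2c in simp_all)
  have ia2: "inv a2 \<in> A" using subgroup.m_inv_closed[OF sA assms(3)] .
  have zeq: "z a2 = z a1 \<otimes> a1 \<otimes> inv a2"
  proof -
    have "z a1 \<otimes> a1 \<otimes> inv a2 = z a2 \<otimes> a2 \<otimes> inv a2" by (simp only: zz)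
    also have "\<dots> = z a2" using z2c a2c by (simp add: m_assoc)
    finally show ?thesis by (rule sym)
  qed
  have comm: "commg G (z a1) h = inv a2 \<otimes> a1"
  proof -
    have "commg G (z a1) h = inv (z a1) \<otimes> (inv h \<otimes> z a1 \<otimes> h)"
      unfolding commg_def using z1c hc by (simp add: m_assoc)
    also have "\<dots> = inv (z a1) \<otimes> z a2" by (simp only: zh)
    also have "\<dots> = inv (z a1) \<otimes> (z a1 \<otimes> a1 \<otimes> inv a2)" by (simp only: zeq)
    also have "\<dots> = a1 \<otimes> inv a2"
      using z1c a1c a2c by (simp add: m_assoc)
    also have "\<dots> = inv a2 \<otimes> a1" by (rule commA[OF assms(2) ia2])
    finally show ?thesis .
  qed
  have hN: "h \<in> normalizer G A \<inter> normalizer G B"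
  proof -
    have conj: "g <# X #> inv g = conjset G X (inv g)" if "X \<subseteq> carrier G" "g \<in> carrier G" for X g
      unfolding l_coset_def r_coset_def conjset_def conjg_def using that by (auto simp: image_image)
    have "conjset G A (inv h) = A" using cs_inv[OF AC hc hA] .
    moreover have "conjset G B (inv h) = B" using cs_inv[OF BC hc hB] .
    ultimately show ?thesis
      unfolding normalizer_def stabilizer_def using conj AC BC hc by auto
  qed
  have "commg G (z a1) h \<in> comm_subgroup G A (normalizer G A \<inter> normalizer G B)"
    unfolding comm_subgroup_def using z1 hN by (auto intro: generate.incl)
  moreover have "a1 = a2 \<otimes> commg G (z a1) h" using comm a1c a2c by (simp add: m_assoc[symmetric])
  ultimately show ?thesis unfolding l_coset_def by auto
qed


theorem lemma2p2:
  fixes G :: "('a, 'b) monoid_scheme" and A B :: "'a set"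
  assumes "special_rank_one_group G A B"
    and "a1 \<in> A" and "a2 \<in> A"
    and "a1 \<noteq> \<one>\<^bsub>G\<^esub>" and "a2 \<noteq> \<one>\<^bsub>G\<^esub>"
    and "a1 \<otimes>\<^bsub>G\<^esub> a2 \<noteq> \<one>\<^bsub>G\<^esub>"
  shows "a1 \<in> a2 <#\<^bsub>G\<^esub> comm_subgroup G A (normalizer G A \<inter> normalizer G B)"
  using group.main_lemma[OF _ assms] assms(1) unfolding special_rank_one_group_def rank_one_group_def by blast

end
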